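(* Let $G$ be a group. For every positive integer $n$, $\bar\lambda_n(G) = N_{n,1}(G)$.
   Context: $\gamma_1(G) = G$, $\gamma_{j+1}(G) = [\gamma_j(G), G]$. For a subgroup $H$ and integer $m$, $H^m$ is the subgroup generated by all $m$-th powers. The $\bar\lambda$-series is $\bar\lambda_1(G) = G$, $\bar\lambda_{n+1}(G) = \bar\lambda_n(G)^4[\bar\lambda_n(G), G]$. For $1 \le k \le n$, $N_{n,k}(G) = \gamma_k(G)^{4^{n-k}}\gamma_{k+1}(G)^{4^{n-k-1}} \cdots \gamma_n(G)$; in particular $N_{n,1}(G) = G^{4^{n-1}}\gamma_2(G)^{4^{n-2}}\cdots\gamma_n(G)$. *)

theory Defs
  imports "HOL-Algebra.Algebra"
begin

definition comm_sgp :: "('a, 'b) monoid_scheme \<Rightarrow> 'a set \<Rightarrow> 'a set \<Rightarrow> 'a set" where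
  "comm_sgp G H K = generate G
     {inv\<^bsub>G\<^esub> h \<otimes>\<^bsub>G\<^esub> inv\<^bsub>G\<^esub> k \<otimes>\<^bsub>G\<^esub> h \<otimes>\<^bsub>G\<^esub> k | h k. h \<in> H \<and> k \<in> K}"

definition pow_sgp :: "('a, 'b) monoid_scheme \<Rightarrow> 'a set \<Rightarrow> nat \<Rightarrow> 'a set" where
  "pow_sgp G H m = generate G {h [^]\<^bsub>G\<^esub> m | h. h \<in> H}"

text \<open>Product HK of subgroups (the subgroup generated by H and K; equal to the
  set product when the factors are normal).\<close>
definition prod_sgp :: "('a, 'b) monoid_scheme \<Rightarrow> 'a set \<Rightarrow> 'a set \<Rightarrow> 'a set" where
  "prod_sgp G H K = generate G (H \<union> K)"

text \<open>Lower central series, shifted: lcs G j = gamma_(j+1)(G).\<close>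
primrec lcs :: "('a, 'b) monoid_scheme \<Rightarrow> nat \<Rightarrow> 'a set" where
  "lcs G 0 = carrier G"
| "lcs G (Suc j) = comm_sgp G (lcs G j) (carrier G)"

definition gamma :: "('a, 'b) monoid_scheme \<Rightarrow> nat \<Rightarrow> 'a set" where
  "gamma G j = lcs G (j - 1)"

text \<open>lambda-bar series, shifted: lbs G j = lambda-bar_(j+1)(G).\<close>
primrec lbs :: "('a, 'b) monoid_scheme \<Rightarrow> nat \<Rightarrow> 'a set" where
  "lbs G 0 = carrier G"
| "lbs G (Suc j) = prod_sgp G (pow_sgp G (lbs G j) 4) (comm_sgp G (lbs G j) (carrier G))"

definition lambda_bar :: "('a, 'b) monoid_scheme \<Rightarrow> nat \<Rightarrow> 'a set" where
  "lambda_bar G n = lbs G (n - 1)"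

text \<open>N_{n,k}(G) = gamma_k^{4^(n-k)} gamma_(k+1)^{4^(n-k-1)} ... gamma_n.\<close>
definition N_sgp :: "('a, 'b) monoid_scheme \<Rightarrow> nat \<Rightarrow> nat \<Rightarrow> 'a set" where
  "N_sgp G n k = generate G (\<Union>i\<in>{k..n}. pow_sgp G (gamma G i) (4 ^ (n - i)))"

end

theory Submission
  imports Defs
begin

context group begin

definition cm :: "'a \<Rightarrow> 'a \<Rightarrow> 'a" where "cm x y = inv x \<otimes> inv y \<otimes> x \<otimes> y"

lemma cm_closed[simp]: "x \<in> carrier G \<Longrightarrow> y \<in> carrier G \<Longrightarrow> cm x y \<in> carrier G"
  unfolding cm_def by simp

lemma canc1[simp]: "g \<in> carrier G \<Longrightarrow> x \<in> carrier G \<Longrightarrow> g \<otimes> (inv g \<otimes> x) = x"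
  by (simp add: m_assoc[symmetric])
lemma canc2[simp]: "g \<in> carrier G \<Longrightarrow> x \<in> carrier G \<Longrightarrow> inv g \<otimes> (g \<otimes> x) = x"
  by (simp add: m_assoc[symmetric])

lemma sub_pow: "subgroup H G \<Longrightarrow> h \<in> H \<Longrightarrow> h [^] (n::nat) \<in> H"
  by (induct n) (auto simp: subgroup.one_closed subgroup.m_closed)

lemma conj_pow: "x \<in> carrier G \<Longrightarrow> g \<in> carrier G \<Longrightarrow> inv g \<otimes> x [^] (n::nat) \<otimes> g = (inv g \<otimes> x \<otimes> g) [^] n"
proof (induct n)
  case 0 thus ?case by (simp add: l_inv)
next
  case (Suc n)
  have "inv g \<otimes> x [^] Suc n \<otimes> g = (inv g \<otimes> x [^] n \<otimes> g) \<otimes> (inv g \<otimes> x \<otimes> g)"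
    using Suc.prems by (simp add: m_assoc)
  then show ?case using Suc by simp
qed

lemma lcs_normal: "lcs G j \<lhd> G"
proof (induct j)
  case 0 thus ?case by (simp add: normal_invI subgroup_self)
next
  case (Suc j)
  interpret N: normal "lcs G j" G by fact
  let ?S = "{inv h \<otimes> inv k \<otimes> h \<otimes> k | h k. h \<in> lcs G j \<and> k \<in> carrier G}"
  have S: "?S \<subseteq> carrier G" by auto
  show ?case unfolding lcs.simps comm_sgp_def
  proof (rule normal_generateI[OF S])
    fix s g assume s: "s \<in> ?S" and g: "g \<in> carrier G"
    then obtain h k where hk: "s = inv h \<otimes> inv k \<otimes> h \<otimes> k" "h \<in> lcs G j" "k \<in> carrier G" by auto
    have h: "h \<in> carrier G" using hk by auto
    let ?h = "g \<otimes> h \<otimes> inv g" and ?k = "g \<otimes> k \<otimes> inv g"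
    have "g \<otimes> s \<otimes> inv g = inv ?h \<otimes> inv ?k \<otimes> ?h \<otimes> ?k"
      using h hk g by (simp add: m_assoc inv_mult_group)
    moreover have "?h \<in> lcs G j" using N.inv_op_closed2 g hk by auto
    moreover have "?k \<in> carrier G" using g hk by auto
    ultimately show "g \<otimes> s \<otimes> inv g \<in> ?S" by blast
  qed
qed


lemma lcs_sub: "lcs G j \<subseteq> carrier G"
  using subgroup.subset[OF normal_imp_subgroup[OF lcs_normal]] .

lemma lcs_sg: "subgroup (lcs G j) G"
  by (rule normal_imp_subgroup[OF lcs_normal])

lemma lcs_conj: "x \<in> lcs G j \<Longrightarrow> g \<in> carrier G \<Longrightarrow> inv g \<otimes> x \<otimes> g \<in> lcs G j"
  by (rule normal.inv_op_closed1[OF lcs_normal])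

lemma lcs_cm: "x \<in> lcs G j \<Longrightarrow> g \<in> carrier G \<Longrightarrow> cm x g \<in> lcs G (Suc j)"
  unfolding lcs.simps comm_sgp_def cm_def
  apply (rule generate.incl) apply (rule CollectI) apply (rule exI[where x=x]) apply (rule exI[where x=g]) by simp

lemma lcs_Suc_sub: "lcs G (Suc j) \<subseteq> lcs G j"
  unfolding lcs.simps comm_sgp_def
proof (rule generate_subgroup_incl)
  show "subgroup (lcs G j) G" by (rule lcs_sg)
  show "{inv h \<otimes> inv k \<otimes> h \<otimes> k |h k. h \<in> lcs G j \<and> k \<in> carrier G} \<subseteq> lcs G j"
  proof clarify
    fix h k assume h: "h \<in> lcs G j" and k: "k \<in> carrier G"
    have hc: "h \<in> carrier G" using h lcs_sub by auto
    have "inv h \<otimes> inv k \<otimes> h \<otimes> k = inv h \<otimes> (inv k \<otimes> h \<otimes> k)"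
      using hc k by (simp add: m_assoc)
    moreover have "inv h \<in> lcs G j" by (rule subgroup.m_inv_closed[OF lcs_sg h])
    moreover have "inv k \<otimes> h \<otimes> k \<in> lcs G j" by (rule lcs_conj[OF h k])
    ultimately show "inv h \<otimes> inv k \<otimes> h \<otimes> k \<in> lcs G j"
      using subgroup.m_closed[OF lcs_sg] by simp
  qed
qed

lemma lcs_anti: "j \<le> j' \<Longrightarrow> lcs G j' \<subseteq> lcs G j"
proof (induct j' rule: dec_induct)
  case base thus ?case by simp
next
  case (step n) thus ?case using lcs_Suc_sub[of n] by blast
qed

definition pw :: "nat \<Rightarrow> nat \<Rightarrow> 'a set" where
  "pw a m = {x [^] ((2::nat) ^ (a - 2 * (j + 1))) | x j. m \<le> j \<and> x \<in> lcs G j}"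

definition NN :: "nat \<Rightarrow> 'a set" where "NN t = generate G (pw t 0)"

definition RR :: "nat \<Rightarrow> nat \<Rightarrow> nat \<Rightarrow> 'a set" where
  "RR t a m = generate G (pw a m \<union> NN t)"

lemma pw_memI: "x \<in> lcs G j \<Longrightarrow> m \<le> j \<Longrightarrow> x [^] ((2::nat) ^ (a - 2 * (j + 1))) \<in> pw a m"
  unfolding pw_def by blast

lemma pw_sub: "pw a m \<subseteq> carrier G"
  unfolding pw_def using lcs_sub by blast

lemma pw_conj: "p \<in> pw a m \<Longrightarrow> g \<in> carrier G \<Longrightarrow> g \<otimes> p \<otimes> inv g \<in> pw a m"
proof -
  assume p: "p \<in> pw a m" and g: "g \<in> carrier G"
  then obtain x j where xj: "p = x [^] ((2::nat) ^ (a - 2 * (j + 1)))" "m \<le> j" "x \<in> lcs G j"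
    unfolding pw_def by blast
  have x: "x \<in> carrier G" using xj lcs_sub by blast
  have "g \<otimes> p \<otimes> inv g = (g \<otimes> x \<otimes> inv g) [^] ((2::nat) ^ (a - 2 * (j + 1)))"
    using conj_pow[of x "inv g"] x g xj(1) by simp
  moreover have "g \<otimes> x \<otimes> inv g \<in> lcs G j"
    using lcs_conj[of x j "inv g"] xj g by simp
  ultimately show ?thesis unfolding pw_def using xj by blast
qed

lemma NN_normal: "NN t \<lhd> G"
  unfolding NN_def by (rule normal_generateI[OF pw_sub pw_conj])

lemma NN_sub: "NN t \<subseteq> carrier G"
  by (rule subgroup.subset[OF normal_imp_subgroup[OF NN_normal]])

lemma RR_normal: "RR t a m \<lhd> G"
  unfolding RR_def
proof (rule normal_generateI)
  show "pw a m \<union> NN t \<subseteq> carrier G" using pw_sub NN_sub by blast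
  fix h g assume "h \<in> pw a m \<union> NN t" "g \<in> carrier G"
  then show "g \<otimes> h \<otimes> inv g \<in> pw a m \<union> NN t"
    using pw_conj normal.inv_op_closed2[OF NN_normal] by auto
qed

lemma RR_sg: "subgroup (RR t a m) G"
  by (rule normal_imp_subgroup[OF RR_normal])

lemma RR_sub: "RR t a m \<subseteq> carrier G"
  by (rule subgroup.subset[OF RR_sg])

lemma NN_RR: "NN t \<subseteq> RR t a m"
  unfolding RR_def by (auto intro: generate.incl)

lemma pw_RR: "pw a m \<subseteq> RR t a m"
  unfolding RR_def by (auto intro: generate.incl)

lemma pow2_split: "p \<le> q \<Longrightarrow> x \<in> carrier G \<Longrightarrow> x [^] ((2::nat) ^ q) = (x [^] ((2::nat) ^ p)) [^] ((2::nat) ^ (q - p))"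
  by (simp add: nat_pow_pow power_add[symmetric])

lemma pw_mono: "a \<le> a' \<Longrightarrow> m \<le> m' \<Longrightarrow> p \<in> pw a' m' \<Longrightarrow> p \<in> RR t a m"
proof -
  assume aa: "a \<le> a'" and mm: "m \<le> m'" and p: "p \<in> pw a' m'"
  then obtain x j where xj: "p = x [^] ((2::nat) ^ (a' - 2 * (j + 1)))" "m' \<le> j" "x \<in> lcs G j"
    unfolding pw_def by blast
  have x: "x \<in> carrier G" using xj lcs_sub by blast
  have b: "x [^] ((2::nat) ^ (a - 2 * (j + 1))) \<in> RR t a m"
    using pw_RR pw_memI[of x j m a] xj mm by auto
  have "p = (x [^] ((2::nat) ^ (a - 2 * (j + 1)))) [^] ((2::nat) ^ ((a' - 2 * (j + 1)) - (a - 2 * (j + 1))))"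
    using pow2_split[of "a - 2 * (j + 1)" "a' - 2 * (j + 1)" x] aa x xj by simp
  then show ?thesis using sub_pow[OF RR_sg b] by simp
qed

lemma RR_mono: "a \<le> a' \<Longrightarrow> m \<le> m' \<Longrightarrow> RR t a' m' \<subseteq> RR t a m"
  unfolding RR_def[of t a' m']
  apply (rule generate_subgroup_incl[OF _ RR_sg])
  using pw_mono NN_RR by auto

lemma pow1[simp]: "x \<in> carrier G \<Longrightarrow> x [^] (1::nat) = x"
  by (simp add: nat_pow_def)

lemma pow2: "x \<in> carrier G \<Longrightarrow> x [^] (2::nat) = x \<otimes> x"
  by (simp add: nat_pow_def numeral_2_eq_2)

lemma cm_one: "g \<in> carrier G \<Longrightarrow> cm \<one> g = \<one>"
  unfolding cm_def by (simp add: m_assoc)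

lemma cm_mult: "y \<in> carrier G \<Longrightarrow> z \<in> carrier G \<Longrightarrow> g \<in> carrier G \<Longrightarrow>
   cm (y \<otimes> z) g = inv z \<otimes> cm y g \<otimes> z \<otimes> cm z g"
  unfolding cm_def by (simp add: m_assoc inv_mult_group)

lemma cm_inv: "y \<in> carrier G \<Longrightarrow> g \<in> carrier G \<Longrightarrow>
   cm (inv y) g = y \<otimes> inv (cm y g) \<otimes> inv y"
  unfolding cm_def by (simp add: m_assoc inv_mult_group)

lemma sq_mult: "y \<in> carrier G \<Longrightarrow> z \<in> carrier G \<Longrightarrow>
   (y \<otimes> z) [^] (2::nat) = y [^] (2::nat) \<otimes> z [^] (2::nat) \<otimes> (inv z \<otimes> cm z y \<otimes> z)"
  unfolding cm_def by (simp add: pow2 m_assoc)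

lemma chain_eq: "u \<in> carrier G \<Longrightarrow> d \<in> carrier G \<Longrightarrow>
   inv (u \<otimes> u) \<otimes> ((u \<otimes> d) \<otimes> (u \<otimes> d)) = d [^] (2::nat) \<otimes> (inv d \<otimes> cm d u \<otimes> d)"
  unfolding cm_def by (simp add: pow2 m_assoc inv_mult_group)

lemma conj_eq: "x \<in> carrier G \<Longrightarrow> g \<in> carrier G \<Longrightarrow> inv g \<otimes> x \<otimes> g = x \<otimes> cm x g"
  unfolding cm_def by (simp add: m_assoc)

lemma cm_conj: "p \<in> carrier G \<Longrightarrow> g \<in> carrier G \<Longrightarrow> cm p g = inv p \<otimes> (inv g \<otimes> p \<otimes> g)"
  unfolding cm_def by (simp add: m_assoc)

lemma normal_cm: "N \<lhd> G \<Longrightarrow> n \<in> N \<Longrightarrow> g \<in> carrier G \<Longrightarrow> cm n g \<in> N"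
proof -
  assume N: "N \<lhd> G" and n: "n \<in> N" and g: "g \<in> carrier G"
  interpret N: normal N G by fact
  have nc: "n \<in> carrier G" using n N.subset by auto
  have "inv n \<in> N" using n by simp
  moreover have "inv g \<otimes> n \<otimes> g \<in> N" using N.inv_op_closed1 g n by simp
  ultimately show ?thesis using cm_conj[OF nc g] by simp
qed

lemma normal_conj: "N \<lhd> G \<Longrightarrow> n \<in> N \<Longrightarrow> g \<in> carrier G \<Longrightarrow> inv g \<otimes> n \<otimes> g \<in> N"
  by (rule normal.inv_op_closed1)

lemma normal_conj': "N \<lhd> G \<Longrightarrow> n \<in> N \<Longrightarrow> g \<in> carrier G \<Longrightarrow> g \<otimes> n \<otimes> inv g \<in> N"
  by (rule normal.inv_op_closed2)

definition Pm :: "nat \<Rightarrow> nat \<Rightarrow> bool" where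
  "Pm t m \<longleftrightarrow> (\<forall>a. \<forall>y\<in>RR t a m. \<forall>g\<in>carrier G. cm y g \<in> RR t (a + 2) (Suc m))
      \<and> (\<forall>a. \<forall>y\<in>RR t a m. y [^] (2::nat) \<in> RR t (Suc a) m)"

lemma RR_in_NN: "t \<le> 2 * (m + 1) \<Longrightarrow> RR t a m \<subseteq> NN t"
  unfolding RR_def[of t a m]
proof (rule generate_subgroup_incl)
  assume t: "t \<le> 2 * (m + 1)"
  show "subgroup (NN t) G" by (rule normal_imp_subgroup[OF NN_normal])
  have "pw a m \<subseteq> NN t"
  proof
    fix p assume "p \<in> pw a m"
    then obtain x j where xj: "p = x [^] ((2::nat) ^ (a - 2 * (j + 1)))" "m \<le> j" "x \<in> lcs G j"
      unfolding pw_def by blast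
    have x: "x \<in> carrier G" using xj lcs_sub by auto
    have "t - 2 * (j + 1) = 0" using t xj by simp
    hence "x \<in> pw t 0" using pw_memI[of x j 0 t] xj x by simp
    hence "x \<in> NN t" unfolding NN_def by (rule generate.incl)
    thus "p \<in> NN t" using xj sub_pow[OF normal_imp_subgroup[OF NN_normal]] by simp
  qed
  thus "pw a m \<union> NN t \<subseteq> NN t" by simp
qed

lemma Pm_base: "t \<le> 2 * (m + 1) \<Longrightarrow> Pm t m"
  unfolding Pm_def
proof (intro conjI allI ballI)
  fix a y g assume t: "t \<le> 2 * (m + 1)" and y: "y \<in> RR t a m" and g: "g \<in> carrier G"
  have "y \<in> NN t" using RR_in_NN[OF t] y by auto
  hence "cm y g \<in> NN t" using normal_cm[OF NN_normal _ g] by simp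
  thus "cm y g \<in> RR t (a + 2) (Suc m)" using NN_RR by auto
next
  fix a y assume t: "t \<le> 2 * (m + 1)" and y: "y \<in> RR t a m"
  have "y \<in> NN t" using RR_in_NN[OF t] y by auto
  hence "y [^] (2::nat) \<in> NN t" using sub_pow[OF normal_imp_subgroup[OF NN_normal]] by simp
  thus "y [^] (2::nat) \<in> RR t (Suc a) m" using NN_RR by auto
qed

lemma chain:
  assumes P: "Pm t (Suc j)" and x: "x \<in> lcs G j" and g: "g \<in> carrier G"
  shows "inv (x [^] ((2::nat) ^ s)) \<otimes> (x \<otimes> cm x g) [^] ((2::nat) ^ s) \<in> RR t (2 * j + 4 + s) (Suc j)"
proof (induct s)
  have xc: "x \<in> carrier G" using x lcs_sub by auto
  have c: "cm x g \<in> lcs G (Suc j)" by (rule lcs_cm[OF x g])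
  have cc: "cm x g \<in> carrier G" using xc g by simp
  have "cm x g [^] ((2::nat) ^ (2 * j + 4 + 0 - 2 * (Suc j + 1))) \<in> pw (2 * j + 4 + 0) (Suc j)"
    by (rule pw_memI[OF c order.refl])
  hence "cm x g \<in> RR t (2 * j + 4 + 0) (Suc j)" using pw_RR cc by auto
  thus "inv (x [^] ((2::nat) ^ 0)) \<otimes> (x \<otimes> cm x g) [^] ((2::nat) ^ 0) \<in> RR t (2 * j + 4 + 0) (Suc j)"
    using xc cc by (simp add: m_assoc[symmetric])
next
  case (Suc s)
  have xc: "x \<in> carrier G" using x lcs_sub by auto
  have cc: "cm x g \<in> carrier G" using xc g by simp
  define u where "u = x [^] ((2::nat) ^ s)"
  define d where "d = inv u \<otimes> (x \<otimes> cm x g) [^] ((2::nat) ^ s)"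
  have u: "u \<in> carrier G" unfolding u_def using xc by simp
  have dc: "d \<in> carrier G" unfolding d_def using u xc cc by simp
  have dR: "d \<in> RR t (2 * j + 4 + s) (Suc j)" using Suc unfolding d_def u_def .
  have W: "(x \<otimes> cm x g) [^] ((2::nat) ^ s) = u \<otimes> d"
    unfolding d_def using u xc cc by (simp add: m_assoc[symmetric])
  have pp: "\<And>z. z \<in> carrier G \<Longrightarrow> z [^] ((2::nat) ^ Suc s) = (z [^] ((2::nat) ^ s)) \<otimes> (z [^] ((2::nat) ^ s))"
  proof -
    fix z assume z: "z \<in> carrier G"
    have "z [^] ((2::nat) ^ Suc s) = (z [^] ((2::nat) ^ s)) [^] (2::nat)"
      using z by (simp add: nat_pow_pow mult.commute)
    thus "z [^] ((2::nat) ^ Suc s) = (z [^] ((2::nat) ^ s)) \<otimes> (z [^] ((2::nat) ^ s))"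
      using z by (simp add: pow2)
  qed
  have e1: "x [^] ((2::nat) ^ Suc s) = u \<otimes> u"
    unfolding u_def using pp[OF xc] .
  have e2: "(x \<otimes> cm x g) [^] ((2::nat) ^ Suc s) = (u \<otimes> d) \<otimes> (u \<otimes> d)"
    using pp[of "x \<otimes> cm x g"] xc cc W by simp
  have eq: "inv (x [^] ((2::nat) ^ Suc s)) \<otimes> (x \<otimes> cm x g) [^] ((2::nat) ^ Suc s)
      = d [^] (2::nat) \<otimes> (inv d \<otimes> cm d u \<otimes> d)"
    unfolding e1 e2 by (rule chain_eq[OF u dc])
  have P1: "\<forall>a. \<forall>y\<in>RR t a (Suc j). \<forall>g\<in>carrier G. cm y g \<in> RR t (a + 2) (Suc (Suc j))"
   and P2: "\<forall>a. \<forall>y\<in>RR t a (Suc j). y [^] (2::nat) \<in> RR t (Suc a) (Suc j)"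
    using P unfolding Pm_def by auto
  have s1: "d [^] (2::nat) \<in> RR t (Suc (2 * j + 4 + s)) (Suc j)" using P2 dR by blast
  hence s1: "d [^] (2::nat) \<in> RR t (2 * j + 4 + Suc s) (Suc j)" by simp
  have "cm d u \<in> RR t (2 * j + 4 + s + 2) (Suc (Suc j))" using P1 dR u by blast
  hence "cm d u \<in> RR t (2 * j + 4 + Suc s) (Suc j)" using RR_mono[of "2 * j + 4 + Suc s" "2 * j + 4 + s + 2" "Suc j" "Suc (Suc j)" t] by auto
  hence s2: "inv d \<otimes> cm d u \<otimes> d \<in> RR t (2 * j + 4 + Suc s) (Suc j)"
    using normal_conj[OF RR_normal _ dc] by simp
  show ?case unfolding eq using subgroup.m_closed[OF RR_sg s1 s2] .
qed

lemma gen_cm: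
  assumes H: "\<And>m'. m < m' \<Longrightarrow> Pm t m'" and p: "p \<in> pw a m" and g: "g \<in> carrier G"
  shows "cm p g \<in> RR t (a + 2) (Suc m)"
proof -
  obtain x j where xj: "p = x [^] ((2::nat) ^ (a - 2 * (j + 1)))" "m \<le> j" "x \<in> lcs G j"
    using p unfolding pw_def by blast
  define e where "e = a - 2 * (j + 1)"
  have xc: "x \<in> carrier G" using xj lcs_sub by auto
  have pe: "p = x [^] ((2::nat) ^ e)" unfolding e_def using xj by simp
  have pc: "p \<in> carrier G" using pe xc by simp
  have "cm p g = inv (x [^] ((2::nat) ^ e)) \<otimes> (inv g \<otimes> x \<otimes> g) [^] ((2::nat) ^ e)"
    using cm_conj[OF pc g] conj_pow[OF xc g] pe by simp
  also have "\<dots> = inv (x [^] ((2::nat) ^ e)) \<otimes> (x \<otimes> cm x g) [^] ((2::nat) ^ e)"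
    using conj_eq[OF xc g] by simp
  finally have eq: "cm p g = inv (x [^] ((2::nat) ^ e)) \<otimes> (x \<otimes> cm x g) [^] ((2::nat) ^ e)" .
  have "Pm t (Suc j)" using H xj by simp
  from chain[OF this xj(3) g, of e] eq
  have "cm p g \<in> RR t (2 * j + 4 + e) (Suc j)" by simp
  moreover have "RR t (2 * j + 4 + e) (Suc j) \<subseteq> RR t (a + 2) (Suc m)"
    by (rule RR_mono) (use xj in \<open>auto simp: e_def\<close>)
  ultimately show ?thesis by auto
qed

lemma Pm_step:
  assumes H: "\<And>m'. m < m' \<Longrightarrow> Pm t m'"
  shows "Pm t m"
proof -
  have C: "\<forall>g\<in>carrier G. cm y g \<in> RR t (a + 2) (Suc m)" if y: "y \<in> RR t a m" for a y
  proof -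
    let ?R = "RR t (a + 2) (Suc m)"
    have gen: "\<forall>g\<in>carrier G. cm h g \<in> ?R" if h: "h \<in> pw a m \<union> NN t" for h
    proof
      fix g assume g: "g \<in> carrier G"
      show "cm h g \<in> ?R"
      proof (cases "h \<in> pw a m")
        case True thus ?thesis using gen_cm[OF H True g] by simp
      next
        case False
        hence "h \<in> NN t" using h by simp
        hence "cm h g \<in> NN t" using normal_cm[OF NN_normal _ g] by simp
        thus ?thesis using NN_RR by auto
      qed
    qed
    have S: "pw a m \<union> NN t \<subseteq> carrier G" using pw_sub NN_sub by auto
    from y show ?thesis unfolding RR_def[of t a m]
    proof (induct rule: generate.induct)
      case one thus ?case using cm_one subgroup.one_closed[OF RR_sg] by simp
    next
      case (incl h) thus ?case using gen by simp
    next
      case (inv h)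
      have hc: "h \<in> carrier G" using inv S by auto
      show ?case
      proof
        fix g assume g: "g \<in> carrier G"
        have "cm h g \<in> ?R" using gen inv g by simp
        hence "inv (cm h g) \<in> ?R" using subgroup.m_inv_closed[OF RR_sg] by simp
        hence "h \<otimes> inv (cm h g) \<otimes> inv h \<in> ?R" using normal_conj'[OF RR_normal _ hc] by simp
        thus "cm (inv h) g \<in> ?R" using cm_inv[OF hc g] by simp
      qed
    next
      case (eng h1 h2)
      have h1c: "h1 \<in> carrier G" using eng(1) generate_in_carrier[OF S] by auto
      have h2c: "h2 \<in> carrier G" using eng(3) generate_in_carrier[OF S] by auto
      show ?case
      proof
        fix g assume g: "g \<in> carrier G"
        have "cm h1 g \<in> ?R" using eng g by simp
        hence "inv h2 \<otimes> cm h1 g \<otimes> h2 \<in> ?R" using normal_conj[OF RR_normal _ h2c] by simp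
        moreover have "cm h2 g \<in> ?R" using eng g by simp
        ultimately have "inv h2 \<otimes> cm h1 g \<otimes> h2 \<otimes> cm h2 g \<in> ?R"
          using subgroup.m_closed[OF RR_sg] by simp
        thus "cm (h1 \<otimes> h2) g \<in> ?R" using cm_mult[OF h1c h2c g] by simp
      qed
    qed
  qed
  have Sq: "y [^] (2::nat) \<in> RR t (Suc a) m" if y: "y \<in> RR t a m" for a y
  proof -
    let ?R = "RR t (Suc a) m"
    have S: "pw a m \<union> NN t \<subseteq> carrier G" using pw_sub NN_sub by auto
    have gen: "h [^] (2::nat) \<in> ?R" if h: "h \<in> pw a m \<union> NN t" for h
    proof (cases "h \<in> pw a m")
      case True
      then obtain x j where xj: "h = x [^] ((2::nat) ^ (a - 2 * (j + 1)))" "m \<le> j" "x \<in> lcs G j"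
        unfolding pw_def by blast
      have xc: "x \<in> carrier G" using xj lcs_sub by auto
      have b0: "x [^] ((2::nat) ^ (Suc a - 2 * (j + 1))) \<in> pw (Suc a) m"
        by (rule pw_memI[OF xj(3) xj(2)])
      have b: "x [^] ((2::nat) ^ (Suc a - 2 * (j + 1))) \<in> ?R"
        using pw_RR[of "Suc a" m t] b0 by (rule subsetD)
      have le: "Suc a - 2 * (j + 1) \<le> Suc (a - 2 * (j + 1))" by simp
      have "h [^] (2::nat) = x [^] ((2::nat) ^ Suc (a - 2 * (j + 1)))"
        using xj xc by (simp add: nat_pow_pow mult.commute)
      also have "\<dots> = (x [^] ((2::nat) ^ (Suc a - 2 * (j + 1)))) [^] ((2::nat) ^ (Suc (a - 2 * (j + 1)) - (Suc a - 2 * (j + 1))))"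
        by (rule pow2_split[OF le xc])
      finally show ?thesis using sub_pow[OF RR_sg b] by simp
    next
      case False
      hence "h \<in> NN t" using h by simp
      hence "h [^] (2::nat) \<in> NN t" using sub_pow[OF normal_imp_subgroup[OF NN_normal]] by simp
      thus ?thesis using NN_RR by auto
    qed
    from y show ?thesis unfolding RR_def[of t a m]
    proof (induct rule: generate.induct)
      case one thus ?case using subgroup.one_closed[OF RR_sg] by simp
    next
      case (incl h) thus ?case using gen by simp
    next
      case (inv h)
      have hc: "h \<in> carrier G" using inv S by auto
      have "h [^] (2::nat) \<in> ?R" using gen inv by simp
      hence "inv (h [^] (2::nat)) \<in> ?R" using subgroup.m_inv_closed[OF RR_sg] by simp
      thus ?case using nat_pow_inv[OF hc] by simp
    next
      case (eng h1 h2)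
      have h1c: "h1 \<in> carrier G" using eng(1) generate_in_carrier[OF S] by auto
      have h2c: "h2 \<in> carrier G" using eng(3) generate_in_carrier[OF S] by auto
      have h2R: "h2 \<in> RR t a m" using eng(3) unfolding RR_def by simp
      have "cm h2 h1 \<in> RR t (a + 2) (Suc m)" using C[OF h2R] h1c by simp
      moreover have "RR t (a + 2) (Suc m) \<subseteq> ?R" by (rule RR_mono) auto
      ultimately have "cm h2 h1 \<in> ?R" by auto
      hence "inv h2 \<otimes> cm h2 h1 \<otimes> h2 \<in> ?R" using normal_conj[OF RR_normal _ h2c] by simp
      moreover have "h1 [^] (2::nat) \<in> ?R" "h2 [^] (2::nat) \<in> ?R" using eng by simp_all
      ultimately show ?case using sq_mult[OF h1c h2c] subgroup.m_closed[OF RR_sg] by simp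
    qed
  qed
  show ?thesis unfolding Pm_def using C Sq by blast
qed

lemma Pm_all: "Pm t m"
proof -
  have "\<forall>m. t \<le> m + k \<longrightarrow> Pm t m" for k
  proof (induct k)
    case 0 thus ?case using Pm_base by auto
  next
    case (Suc k)
    show ?case
    proof (intro allI impI)
      fix m assume m: "t \<le> m + Suc k"
      show "Pm t m"
      proof (rule Pm_step)
        fix m' assume "m < m'" thus "Pm t m'" using Suc m by auto
      qed
    qed
  qed
  thus ?thesis by (metis le_add2)
qed

lemma RR_tchange: "a \<le> t \<Longrightarrow> RR t a 0 \<subseteq> RR t' a 0"
  unfolding RR_def[of t a 0]
proof (rule generate_subgroup_incl[OF _ RR_sg])
  assume at: "a \<le> t"
  have "NN t \<subseteq> RR t' a 0" unfolding NN_def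
    by (rule generate_subgroup_incl[OF _ RR_sg]) (use pw_mono[OF at] in auto)
  thus "pw a 0 \<union> NN t \<subseteq> RR t' a 0" using pw_RR by auto
qed

definition VV :: "nat \<Rightarrow> 'a set" where "VV a = RR a a 0"

lemma VV_sg: "subgroup (VV a) G" unfolding VV_def by (rule RR_sg)

lemma VV_sub: "VV a \<subseteq> carrier G" unfolding VV_def by (rule RR_sub)

lemma VV_gen: "x \<in> lcs G j \<Longrightarrow> x [^] ((2::nat) ^ (a - 2 * (j + 1))) \<in> VV a"
  unfolding VV_def using pw_RR pw_memI[of x j 0 a] by auto

lemma VV_incl:
  assumes S: "subgroup S G" and gen: "\<And>x j. x \<in> lcs G j \<Longrightarrow> x [^] ((2::nat) ^ (a - 2 * (j + 1))) \<in> S"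
  shows "VV a \<subseteq> S"
proof -
  have pw: "pw a 0 \<subseteq> S" unfolding pw_def using gen by auto
  have "NN a \<subseteq> S" unfolding NN_def by (rule generate_subgroup_incl[OF pw S])
  thus ?thesis unfolding VV_def RR_def using generate_subgroup_incl[OF _ S] pw by auto
qed

lemma VV_cm: "y \<in> VV a \<Longrightarrow> g \<in> carrier G \<Longrightarrow> cm y g \<in> VV (a + 2)"
proof -
  assume y: "y \<in> VV a" and g: "g \<in> carrier G"
  have "y \<in> RR (a + 2) a 0" using y RR_tchange[of a a "a + 2"] unfolding VV_def by auto
  hence "cm y g \<in> RR (a + 2) (a + 2) (Suc 0)" using Pm_all[of "a + 2" 0] g unfolding Pm_def by blast
  thus ?thesis unfolding VV_def using RR_mono[of "a + 2" "a + 2" 0 "Suc 0" "a + 2"] by auto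
qed

lemma VV_sq: "y \<in> VV a \<Longrightarrow> y [^] (2::nat) \<in> VV (Suc a)"
proof -
  assume y: "y \<in> VV a"
  have "y \<in> RR (Suc a) a 0" using y RR_tchange[of a a "Suc a"] unfolding VV_def by auto
  hence "y [^] (2::nat) \<in> RR (Suc a) (Suc a) 0" using Pm_all[of "Suc a" 0] unfolding Pm_def by blast
  thus ?thesis unfolding VV_def .
qed

lemma pow4: "(4::nat) ^ k = 2 ^ (2 * k)"
  by (simp add: power_mult)

lemma N_eq: "1 \<le> n \<Longrightarrow> N_sgp G n 1 = VV (2 * n)"
proof
  assume n: "1 \<le> n"
  let ?U = "\<Union>i\<in>{1..n}. pow_sgp G (gamma G i) (4 ^ (n - i))"
  have Usub: "?U \<subseteq> carrier G"
  proof -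
    have "pow_sgp G (gamma G i) (4 ^ (n - i)) \<subseteq> carrier G" for i
      unfolding pow_sgp_def gamma_def by (rule generate_incl) (use lcs_sub in auto)
    thus ?thesis by auto
  qed
  show "N_sgp G n 1 \<subseteq> VV (2 * n)"
    unfolding N_sgp_def
  proof (rule generate_subgroup_incl[OF _ VV_sg])
    show "?U \<subseteq> VV (2 * n)"
    proof (rule UN_least)
      fix i assume i: "i \<in> {1..n}"
      show "pow_sgp G (gamma G i) (4 ^ (n - i)) \<subseteq> VV (2 * n)"
        unfolding pow_sgp_def
      proof (rule generate_subgroup_incl[OF _ VV_sg], clarify)
        fix h assume h: "h \<in> gamma G i"
        have "h \<in> lcs G (i - 1)" using h unfolding gamma_def .
        from VV_gen[OF this, of "2 * n"]
        have "h [^] ((2::nat) ^ (2 * n - 2 * (i - 1 + 1))) \<in> VV (2 * n)" .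
        moreover have "(2::nat) ^ (2 * n - 2 * (i - 1 + 1)) = 4 ^ (n - i)"
          using i by (simp add: pow4 diff_mult_distrib2)
        ultimately show "h [^] ((4::nat) ^ (n - i)) \<in> VV (2 * n)" by simp
      qed
    qed
  qed
  show "VV (2 * n) \<subseteq> N_sgp G n 1"
  proof (rule VV_incl)
    show "subgroup (N_sgp G n 1) G" unfolding N_sgp_def by (rule generate_is_subgroup[OF Usub])
    fix x j assume x: "x \<in> lcs G j"
    have xc: "x \<in> carrier G" using x lcs_sub by auto
    have inU: "y \<in> N_sgp G n 1" if "i \<in> {1..n}" "y \<in> pow_sgp G (gamma G i) (4 ^ (n - i))" for i y
      unfolding N_sgp_def by (rule generate.incl, rule UN_I[where B="\<lambda>i. pow_sgp G (gamma G i) (4 ^ (n - i))", OF that(1) that(2)])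
    show "x [^] ((2::nat) ^ (2 * n - 2 * (j + 1))) \<in> N_sgp G n 1"
    proof (cases "j + 1 \<le> n")
      case True
      have "x \<in> gamma G (j + 1)" unfolding gamma_def using x by simp
      hence "x [^] ((4::nat) ^ (n - (j + 1))) \<in> pow_sgp G (gamma G (j + 1)) (4 ^ (n - (j + 1)))"
        unfolding pow_sgp_def by (auto intro: generate.incl)
      moreover have "(2::nat) ^ (2 * n - 2 * (j + 1)) = 4 ^ (n - (j + 1))"
        by (simp add: pow4 diff_mult_distrib2)
      ultimately show ?thesis using inU[of "j + 1"] True by auto
    next
      case False
      have "n - 1 \<le> j" using False by simp
      hence "x \<in> lcs G (n - 1)" using lcs_anti[of "n - 1" j] x by auto
      hence "x \<in> gamma G n" unfolding gamma_def .
      hence "x [^] ((4::nat) ^ (n - n)) \<in> pow_sgp G (gamma G n) (4 ^ (n - n))"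
        unfolding pow_sgp_def by (auto intro: generate.incl)
      hence "x \<in> N_sgp G n 1" using inU[of n] n xc by auto
      moreover have "2 * n - 2 * (j + 1) = 0" using False by simp
      ultimately show ?thesis using xc by simp
    qed
  qed
qed

lemma lbs_eq: "lbs G j = VV (2 * j + 2)"
proof (induct j)
  case 0
  have "carrier G \<subseteq> VV 2"
  proof
    fix x assume "x \<in> carrier G"
    hence "x \<in> lcs G 0" by simp
    from VV_gen[OF this, of 2] show "x \<in> VV 2" using \<open>x \<in> carrier G\<close> by simp
  qed
  hence c: "carrier G = VV 2" using VV_sub[of 2] by (rule equalityI)
  have e: "2 * 0 + 2 = (2::nat)" by simp
  show ?case unfolding e lbs.simps by (rule c)
next
  case (Suc j)
  let ?L = "VV (2 * j + 2)"
  let ?A = "pow_sgp G ?L 4" and ?B = "comm_sgp G ?L (carrier G)"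
  have Lsub: "?L \<subseteq> carrier G" by (rule VV_sub)
  have Asub: "?A \<subseteq> carrier G" unfolding pow_sgp_def by (rule generate_incl) (use Lsub in auto)
  have Bsub: "?B \<subseteq> carrier G" unfolding comm_sgp_def by (rule generate_incl) (use Lsub in auto)
  have eq: "lbs G (Suc j) = generate G (?A \<union> ?B)"
    using Suc by (simp add: prod_sgp_def)
  show ?case unfolding eq
  proof
    show "generate G (?A \<union> ?B) \<subseteq> VV (2 * Suc j + 2)"
    proof (rule generate_subgroup_incl[OF _ VV_sg])
      have "?A \<subseteq> VV (2 * Suc j + 2)" unfolding pow_sgp_def
      proof (rule generate_subgroup_incl[OF _ VV_sg], clarify)
        fix h assume h: "h \<in> ?L"
        have hc: "h \<in> carrier G" using h Lsub by auto
        have "h [^] (2::nat) \<in> VV (Suc (2 * j + 2))" by (rule VV_sq[OF h])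
        hence "(h [^] (2::nat)) [^] (2::nat) \<in> VV (Suc (Suc (2 * j + 2)))" by (rule VV_sq)
        moreover have "(h [^] (2::nat)) [^] (2::nat) = h [^] (4::nat)" using hc by (simp add: nat_pow_pow)
        ultimately show "h [^] (4::nat) \<in> VV (2 * Suc j + 2)" by simp
      qed
      moreover have "?B \<subseteq> VV (2 * Suc j + 2)" unfolding comm_sgp_def
      proof (rule generate_subgroup_incl[OF _ VV_sg], clarify)
        fix h k assume h: "h \<in> ?L" and k: "k \<in> carrier G"
        have "cm h k \<in> VV (2 * j + 2 + 2)" by (rule VV_cm[OF h k])
        thus "inv h \<otimes> inv k \<otimes> h \<otimes> k \<in> VV (2 * Suc j + 2)" unfolding cm_def by simp
      qed
      ultimately show "?A \<union> ?B \<subseteq> VV (2 * Suc j + 2)" by auto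
    qed
    show "VV (2 * Suc j + 2) \<subseteq> generate G (?A \<union> ?B)"
    proof (rule VV_incl)
      have ABsub: "?A \<union> ?B \<subseteq> carrier G" using Asub Bsub by auto
      show "subgroup (generate G (?A \<union> ?B)) G" by (rule generate_is_subgroup[OF ABsub])
      fix x k assume x: "x \<in> lcs G k"
      have xc: "x \<in> carrier G" using x lcs_sub by auto
      show "x [^] ((2::nat) ^ (2 * Suc j + 2 - 2 * (k + 1))) \<in> generate G (?A \<union> ?B)"
      proof (cases "k \<le> j")
        case True
        let ?e = "2 * j + 2 - 2 * (k + 1)"
        have in_L: "x [^] ((2::nat) ^ ?e) \<in> ?L" by (rule VV_gen[OF x])
        have e: "2 * Suc j + 2 - 2 * (k + 1) = ?e + 2" using True by simp
        have "x [^] ((2::nat) ^ (2 * Suc j + 2 - 2 * (k + 1))) = (x [^] ((2::nat) ^ ?e)) [^] (4::nat)"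
          unfolding e using xc by (simp add: nat_pow_pow power_add mult.commute)
        moreover have "(x [^] ((2::nat) ^ ?e)) [^] (4::nat) \<in> ?A"
          unfolding pow_sgp_def using in_L by (auto intro: generate.incl)
        ultimately show ?thesis by (auto intro: generate.incl)
      next
        case False
        have e: "2 * Suc j + 2 - 2 * (k + 1) = 0" using False by simp
        have x1: "x \<in> lcs G (Suc j)" using lcs_anti[of "Suc j" k] x False by auto
        have "lcs G j \<subseteq> ?L"
        proof
          fix y assume y: "y \<in> lcs G j"
          have "y [^] ((2::nat) ^ (2 * j + 2 - 2 * (j + 1))) \<in> ?L" by (rule VV_gen[OF y])
          moreover have "y \<in> carrier G" using y lcs_sub by auto
          ultimately show "y \<in> ?L" by simp
        qed
        hence "lcs G (Suc j) \<subseteq> ?B" unfolding lcs.simps comm_sgp_def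
          by (intro mono_generate) blast
        hence "x \<in> ?B" using x1 by auto
        thus ?thesis unfolding e using xc by (auto intro: generate.incl)
      qed
    qed
  qed
qed

end

theorem mainTheorem8:
  fixes G :: "('a, 'b) monoid_scheme" and n :: nat
  assumes "group G" and "n \<ge> 1"
  shows "lambda_bar G n = N_sgp G n 1"
proof -
  interpret group G by fact
  have "lambda_bar G n = VV (2 * (n - 1) + 2)" unfolding lambda_bar_def by (rule lbs_eq)
  also have "2 * (n - 1) + 2 = 2 * n" using assms(2) by simp
  also have "VV (2 * n) = N_sgp G n 1" using N_eq[OF assms(2)] by simp
  finally show ?thesis .
qed

end
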